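(* Let $\mathcal{X}=\mathcal{X}^{(1)}\times\cdots\times\mathcal{X}^{(d)}$ with each $\mathcal{X}^{(j)}$ finite, $\pi$ a positive probability mass on $\mathcal{X}$, $\emptyset\ne S\subseteq\{1,\dots,d\}$, and $P$ a lazy, ergodic, $\pi$-reversible transition matrix on $\mathcal{X}$. Then $\gamma(P)\le\gamma(P^{(S)}\otimes P^{(-S)})$; in particular $t_{rel}(P)\ge t_{rel}(P^{(S)}\otimes P^{(-S)})$.
   Context: $P$ is lazy if $P(x,x)\ge1/2$ for all $x$. For $S\subseteq\{1,\dots,d\}$: $\pi^{(S)}(x^{(S)})=\sum_{x^{(-S)}}\pi(x)$ and $P^{(S)}(x^{(S)},y^{(S)}):=\frac{\sum_{x^{(-S)},y^{(-S)}}\pi(x)P(x,y)}{\pi^{(S)}(x^{(S)})}$; $P^{(-S)}:=P^{(\{1,\dots,d\}\setminus S)}$. $(P^{(S)}\otimes P^{(-S)})(x,y)=P^{(S)}(x^{(S)},y^{(S)})P^{(-S)}(x^{(-S)},y^{(-S)})$, with stationary distribution $\pi^{(S)}\otimes\pi^{(-S)}$. The right spectral gap of a chain $Q$ with stationary $\mu$ is $\gamma(Q)=\inf_{\mathrm{Var}_\mu f\ne0}\frac{\frac12\sum_{x,y}\mu(x)Q(x,y)(f(x)-f(y))^2}{\mathrm{Var}_\mu(f)}$, and $t_{rel}(Q)=1/\gamma(Q)$. *)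

theory Defs
  imports "HOL-Analysis.Analysis"
begin

text \<open>A transition matrix is a function Q :: 'x => 'x => real; only its values on
  \<Omega> x \<Omega> matter.\<close>

definition stochastic_on :: "'x set \<Rightarrow> ('x \<Rightarrow> 'x \<Rightarrow> real) \<Rightarrow> bool" where
  "stochastic_on \<Omega> Q \<longleftrightarrow> (\<forall>x\<in>\<Omega>. \<forall>y\<in>\<Omega>. Q x y \<ge> 0) \<and> (\<forall>x\<in>\<Omega>. (\<Sum>y\<in>\<Omega>. Q x y) = 1)"

definition prob_mass_pos :: "'x set \<Rightarrow> ('x \<Rightarrow> real) \<Rightarrow> bool" where
  "prob_mass_pos \<Omega> \<mu> \<longleftrightarrow> (\<forall>x\<in>\<Omega>. \<mu> x > 0) \<and> (\<Sum>x\<in>\<Omega>. \<mu> x) = 1"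

definition lazy_on :: "'x set \<Rightarrow> ('x \<Rightarrow> 'x \<Rightarrow> real) \<Rightarrow> bool" where
  "lazy_on \<Omega> Q \<longleftrightarrow> (\<forall>x\<in>\<Omega>. Q x x \<ge> 1/2)"

definition reversible_on :: "'x set \<Rightarrow> ('x \<Rightarrow> real) \<Rightarrow> ('x \<Rightarrow> 'x \<Rightarrow> real) \<Rightarrow> bool" where
  "reversible_on \<Omega> \<mu> Q \<longleftrightarrow> (\<forall>x\<in>\<Omega>. \<forall>y\<in>\<Omega>. \<mu> x * Q x y = \<mu> y * Q y x)"

fun mpow :: "'x set \<Rightarrow> ('x \<Rightarrow> 'x \<Rightarrow> real) \<Rightarrow> nat \<Rightarrow> 'x \<Rightarrow> 'x \<Rightarrow> real" where
  "mpow \<Omega> Q 0 x y = (if x = y then 1 else 0)"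
| "mpow \<Omega> Q (Suc n) x y = (\<Sum>z\<in>\<Omega>. mpow \<Omega> Q n x z * Q z y)"

definition irreducible_on :: "'x set \<Rightarrow> ('x \<Rightarrow> 'x \<Rightarrow> real) \<Rightarrow> bool" where
  "irreducible_on \<Omega> Q \<longleftrightarrow> (\<forall>x\<in>\<Omega>. \<forall>y\<in>\<Omega>. \<exists>n. mpow \<Omega> Q n x y > 0)"

definition aperiodic_on :: "'x set \<Rightarrow> ('x \<Rightarrow> 'x \<Rightarrow> real) \<Rightarrow> bool" where
  "aperiodic_on \<Omega> Q \<longleftrightarrow> (\<forall>x\<in>\<Omega>. Gcd {n. n \<ge> 1 \<and> mpow \<Omega> Q n x x > 0} = 1)"

definition ergodic_on :: "'x set \<Rightarrow> ('x \<Rightarrow> 'x \<Rightarrow> real) \<Rightarrow> bool" where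
  "ergodic_on \<Omega> Q \<longleftrightarrow> irreducible_on \<Omega> Q \<and> aperiodic_on \<Omega> Q"

definition expect :: "'x set \<Rightarrow> ('x \<Rightarrow> real) \<Rightarrow> ('x \<Rightarrow> real) \<Rightarrow> real" where
  "expect \<Omega> \<mu> f = (\<Sum>x\<in>\<Omega>. \<mu> x * f x)"

definition var :: "'x set \<Rightarrow> ('x \<Rightarrow> real) \<Rightarrow> ('x \<Rightarrow> real) \<Rightarrow> real" where
  "var \<Omega> \<mu> f = (\<Sum>x\<in>\<Omega>. \<mu> x * (f x - expect \<Omega> \<mu> f)^2)"

definition dirichlet :: "'x set \<Rightarrow> ('x \<Rightarrow> real) \<Rightarrow> ('x \<Rightarrow> 'x \<Rightarrow> real) \<Rightarrow> ('x \<Rightarrow> real) \<Rightarrow> real" where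
  "dirichlet \<Omega> \<mu> Q f = (1/2) * (\<Sum>x\<in>\<Omega>. \<Sum>y\<in>\<Omega>. \<mu> x * Q x y * (f x - f y)^2)"

definition spectral_gap :: "'x set \<Rightarrow> ('x \<Rightarrow> real) \<Rightarrow> ('x \<Rightarrow> 'x \<Rightarrow> real) \<Rightarrow> real" where
  "spectral_gap \<Omega> \<mu> Q = Inf {dirichlet \<Omega> \<mu> Q f / var \<Omega> \<mu> f | f. var \<Omega> \<mu> f \<noteq> 0}"

definition t_rel :: "'x set \<Rightarrow> ('x \<Rightarrow> real) \<Rightarrow> ('x \<Rightarrow> 'x \<Rightarrow> real) \<Rightarrow> real" where
  "t_rel \<Omega> \<mu> Q = 1 / spectral_gap \<Omega> \<mu> Q"

text \<open>States of X = X(1) x ... x X(d) are functions on {1..d} (extensional, PiE).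
  The projection x^(S) is restrict x S.\<close>

definition prod_space :: "nat \<Rightarrow> (nat \<Rightarrow> 'a set) \<Rightarrow> (nat \<Rightarrow> 'a) set" where
  "prod_space d X = PiE {1..d} X"

definition marg :: "(nat \<Rightarrow> 'a) set \<Rightarrow> ((nat \<Rightarrow> 'a) \<Rightarrow> real) \<Rightarrow> nat set \<Rightarrow> (nat \<Rightarrow> 'a) \<Rightarrow> real" where
  "marg \<Omega> \<pi> S xs = (\<Sum>x\<in>{x\<in>\<Omega>. restrict x S = xs}. \<pi> x)"

definition proj_chain :: "(nat \<Rightarrow> 'a) set \<Rightarrow> ((nat \<Rightarrow> 'a) \<Rightarrow> real) \<Rightarrow> ((nat \<Rightarrow> 'a) \<Rightarrow> (nat \<Rightarrow> 'a) \<Rightarrow> real)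
    \<Rightarrow> nat set \<Rightarrow> (nat \<Rightarrow> 'a) \<Rightarrow> (nat \<Rightarrow> 'a) \<Rightarrow> real" where
  "proj_chain \<Omega> \<pi> P S xs ys =
     (\<Sum>x\<in>{x\<in>\<Omega>. restrict x S = xs}. \<Sum>y\<in>{y\<in>\<Omega>. restrict y S = ys}. \<pi> x * P x y) / marg \<Omega> \<pi> S xs"

definition tensor_chain :: "nat \<Rightarrow> (nat \<Rightarrow> 'a set) \<Rightarrow> ((nat \<Rightarrow> 'a) \<Rightarrow> real) \<Rightarrow> ((nat \<Rightarrow> 'a) \<Rightarrow> (nat \<Rightarrow> 'a) \<Rightarrow> real)
    \<Rightarrow> nat set \<Rightarrow> (nat \<Rightarrow> 'a) \<Rightarrow> (nat \<Rightarrow> 'a) \<Rightarrow> real" where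
  "tensor_chain d X \<pi> P S x y =
     proj_chain (prod_space d X) \<pi> P S (restrict x S) (restrict y S) *
     proj_chain (prod_space d X) \<pi> P ({1..d} - S) (restrict x ({1..d} - S)) (restrict y ({1..d} - S))"

definition tensor_marg :: "nat \<Rightarrow> (nat \<Rightarrow> 'a set) \<Rightarrow> ((nat \<Rightarrow> 'a) \<Rightarrow> real) \<Rightarrow> nat set \<Rightarrow> (nat \<Rightarrow> 'a) \<Rightarrow> real" where
  "tensor_marg d X \<pi> S x =
     marg (prod_space d X) \<pi> S (restrict x S) * marg (prod_space d X) \<pi> ({1..d} - S) (restrict x ({1..d} - S))"

end

theory Submission
  imports Defs
begin

lemma dirichlet_eq:
  assumes fin: "finite Z"
    and rows: "\<And>x. x \<in> Z \<Longrightarrow> (\<Sum>y\<in>Z. Q x y) = 1"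
    and rev: "\<And>x y. x \<in> Z \<Longrightarrow> y \<in> Z \<Longrightarrow> \<mu> x * Q x y = \<mu> y * Q y x"
  shows "dirichlet Z \<mu> Q g = (\<Sum>x\<in>Z. \<mu> x * g x ^ 2) - (\<Sum>x\<in>Z. \<Sum>y\<in>Z. \<mu> x * Q x y * g x * g y)"
proof -
  have pw: "\<mu> x * Q x y * (g x - g y)^2 = \<mu> x * Q x y * g x ^ 2 - 2 * (\<mu> x * Q x y * g x * g y) + \<mu> x * Q x y * g y ^ 2" for x y
    by (simp add: power2_diff algebra_simps)
  have s1: "(\<Sum>x\<in>Z. \<Sum>y\<in>Z. \<mu> x * Q x y * g x ^ 2) = (\<Sum>x\<in>Z. \<mu> x * g x ^ 2)"
  proof (rule sum.cong[OF refl])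
    fix x assume "x \<in> Z"
    have "(\<Sum>y\<in>Z. \<mu> x * Q x y * g x ^ 2) = \<mu> x * g x ^ 2 * (\<Sum>y\<in>Z. Q x y)"
      by (simp add: sum_distrib_left sum_distrib_right mult_ac)
    then show "(\<Sum>y\<in>Z. \<mu> x * Q x y * g x ^ 2) = \<mu> x * g x ^ 2" using rows[OF \<open>x \<in> Z\<close>] by simp
  qed
  have s3: "(\<Sum>x\<in>Z. \<Sum>y\<in>Z. \<mu> x * Q x y * g y ^ 2) = (\<Sum>x\<in>Z. \<mu> x * g x ^ 2)"
  proof -
    have "(\<Sum>x\<in>Z. \<Sum>y\<in>Z. \<mu> x * Q x y * g y ^ 2) = (\<Sum>x\<in>Z. \<Sum>y\<in>Z. \<mu> y * Q y x * g y ^ 2)"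
      by (intro sum.cong refl) (simp add: rev)
    also have "\<dots> = (\<Sum>y\<in>Z. \<Sum>x\<in>Z. \<mu> y * Q y x * g y ^ 2)" by (rule sum.swap)
    also have "\<dots> = (\<Sum>x\<in>Z. \<mu> x * g x ^ 2)" using s1 by simp
    finally show ?thesis .
  qed
  have "dirichlet Z \<mu> Q g = (1/2) * ((\<Sum>x\<in>Z. \<Sum>y\<in>Z. \<mu> x * Q x y * g x ^ 2) - 2 * (\<Sum>x\<in>Z. \<Sum>y\<in>Z. \<mu> x * Q x y * g x * g y) + (\<Sum>x\<in>Z. \<Sum>y\<in>Z. \<mu> x * Q x y * g y ^ 2))"
    unfolding dirichlet_def pw by (simp add: sum.distrib sum_subtractf sum_distrib_left)
  then show ?thesis using s1 s3 by simp
qed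


lemma var_eq:
  assumes fin: "finite Z" and s: "sum \<mu> Z = 1"
  shows "var Z \<mu> g = (\<Sum>x\<in>Z. \<mu> x * g x ^ 2) - (\<Sum>x\<in>Z. \<mu> x * g x)^2"
proof -
  define m where "m = expect Z \<mu> g"
  have pw: "\<mu> x * (g x - m)^2 = \<mu> x * g x ^ 2 - 2 * m * (\<mu> x * g x) + m^2 * \<mu> x" for x
    by (simp add: power2_diff algebra_simps)
  have "var Z \<mu> g = (\<Sum>x\<in>Z. \<mu> x * g x ^ 2) - 2 * m * m + m^2"
    unfolding var_def m_def[symmetric] pw
    by (simp add: sum.distrib sum_subtractf sum_distrib_left[symmetric] s m_def expect_def)
  then show ?thesis by (simp add: m_def expect_def power2_eq_square)
qed

lemma var_eq2:
  assumes fin: "finite Z" and s: "sum \<mu> Z = 1"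
  shows "var Z \<mu> g = (\<Sum>x\<in>Z. \<mu> x * g x ^ 2) - (\<Sum>x\<in>Z. \<Sum>y\<in>Z. \<mu> x * \<mu> y * g x * g y)"
proof -
  have "(\<Sum>x\<in>Z. \<mu> x * g x)^2 = (\<Sum>x\<in>Z. \<Sum>y\<in>Z. \<mu> x * \<mu> y * g x * g y)"
    by (simp add: power2_eq_square sum_product algebra_simps)
  then show ?thesis using var_eq[OF assms] by simp
qed

lemma aux_ineq: "0 \<le> (a::real) * (2 * z + x + y) \<Longrightarrow> - (a * (x + y)) / 2 \<le> a * z"
proof -
  assume h: "0 \<le> a * (2 * z + x + y)"
  have "a * (2 * z + x + y) = 2 * (a * z) + a * (x + y)" by (simp add: algebra_simps)
  then show ?thesis using h by linarith
qed

lemma lazy_weighted_nonneg: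
  fixes \<nu> :: "'v \<Rightarrow> real"
  assumes fin: "finite V"
    and nu: "\<And>v. v \<in> V \<Longrightarrow> \<nu> v \<ge> 0"
    and Bnn: "\<And>v w. v \<in> V \<Longrightarrow> w \<in> V \<Longrightarrow> B v w \<ge> 0"
    and lazy: "\<And>v. v \<in> V \<Longrightarrow> B v v \<ge> 1/2"
    and rows: "\<And>v. v \<in> V \<Longrightarrow> (\<Sum>w\<in>V. B v w) = 1"
    and rev: "\<And>v w. v \<in> V \<Longrightarrow> w \<in> V \<Longrightarrow> \<nu> v * B v w = \<nu> w * B w v"
    and Ld: "\<And>v. v \<in> V \<Longrightarrow> L v v \<ge> 0"
    and Lo: "\<And>v w. v \<in> V \<Longrightarrow> w \<in> V \<Longrightarrow> 2 * L v w + L v v + L w w \<ge> 0"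
  shows "(\<Sum>v\<in>V. \<Sum>w\<in>V. \<nu> v * B v w * L v w) \<ge> 0"
proof -
  define R where "R v w = (if v = w then 2 * (\<nu> v * B v v * L v v) else 0) - \<nu> v * B v w * (L v v + L w w) / 2" for v w
  have le: "R v w \<le> \<nu> v * B v w * L v w" if "v \<in> V" "w \<in> V" for v w
  proof (cases "v = w")
    case True then show ?thesis by (simp add: R_def)
  next
    case False
    have h: "0 \<le> \<nu> v * B v w * (2 * L v w + L v v + L w w)"
      using nu Bnn Lo that by simp
    have R: "R v w = - (\<nu> v * B v w * (L v v + L w w)) / 2" using False by (simp add: R_def)
    show ?thesis unfolding R using aux_ineq[OF h] .
  qed
  have d: "(\<Sum>v\<in>V. \<Sum>w\<in>V. (if v = w then 2 * (\<nu> v * B v v * L v v) else 0)) = (\<Sum>v\<in>V. 2 * (\<nu> v * B v v * L v v))"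
    using fin by (simp add: sum.delta)
  have a: "(\<Sum>v\<in>V. \<Sum>w\<in>V. \<nu> v * B v w * L v v) = (\<Sum>v\<in>V. \<nu> v * L v v)"
  proof (rule sum.cong[OF refl])
    fix v assume v: "v \<in> V"
    have "(\<Sum>w\<in>V. \<nu> v * B v w * L v v) = \<nu> v * L v v * (\<Sum>w\<in>V. B v w)"
      by (simp add: sum_distrib_left sum_distrib_right mult_ac)
    then show "(\<Sum>w\<in>V. \<nu> v * B v w * L v v) = \<nu> v * L v v" using rows[OF v] by simp
  qed
  have b: "(\<Sum>v\<in>V. \<Sum>w\<in>V. \<nu> v * B v w * L w w) = (\<Sum>v\<in>V. \<nu> v * L v v)"
  proof -
    have "(\<Sum>v\<in>V. \<Sum>w\<in>V. \<nu> v * B v w * L w w) = (\<Sum>v\<in>V. \<Sum>w\<in>V. \<nu> w * B w v * L w w)"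
      by (intro sum.cong refl) (simp add: rev)
    also have "\<dots> = (\<Sum>w\<in>V. \<Sum>v\<in>V. \<nu> w * B w v * L w w)" by (rule sum.swap)
    finally show ?thesis using a by simp
  qed
  have "(\<Sum>v\<in>V. \<Sum>w\<in>V. R v w) = (\<Sum>v\<in>V. 2 * (\<nu> v * B v v * L v v)) - ((\<Sum>v\<in>V. \<Sum>w\<in>V. \<nu> v * B v w * L v v) + (\<Sum>v\<in>V. \<Sum>w\<in>V. \<nu> v * B v w * L w w)) / 2"
    unfolding R_def by (simp add: sum_subtractf d sum.distrib sum_divide_distrib[symmetric] algebra_simps)
  also have "\<dots> = (\<Sum>v\<in>V. \<nu> v * (2 * B v v - 1) * L v v)"
    using a b by (simp add: sum_subtractf[symmetric] algebra_simps)
  also have "\<dots> \<ge> 0"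
    by (intro sum_nonneg mult_nonneg_nonneg) (use nu lazy Ld in \<open>auto simp: mult.commute\<close>)
  finally have "0 \<le> (\<Sum>v\<in>V. \<Sum>w\<in>V. R v w)" .
  also have "\<dots> \<le> (\<Sum>v\<in>V. \<Sum>w\<in>V. \<nu> v * B v w * L v w)"
    by (intro sum_mono le)
  finally show ?thesis .
qed


definition bf :: "'u set \<Rightarrow> ('u \<Rightarrow> 'u \<Rightarrow> real) \<Rightarrow> ('u \<Rightarrow> real) \<Rightarrow> ('u \<Rightarrow> real) \<Rightarrow> real" where
  "bf U W g h = (\<Sum>u\<in>U. \<Sum>u'\<in>U. W u u' * g u * h u')"

definition Phi :: "'u set \<Rightarrow> 'v set \<Rightarrow> ('u \<Rightarrow> 'u \<Rightarrow> real) \<Rightarrow> ('v \<Rightarrow> 'v \<Rightarrow> real) \<Rightarrow> ('u \<times> 'v \<Rightarrow> real) \<Rightarrow> real" where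
  "Phi U V W1 W2 f = (\<Sum>v\<in>V. \<Sum>v'\<in>V. W2 v v' * bf U W1 (\<lambda>u. f (u, v)) (\<lambda>u. f (u, v')))"

lemma bf_lin: "bf U (\<lambda>u u'. a * X u u' + e * Y u u') g h = a * bf U X g h + e * bf U Y g h"
  unfolding bf_def by (simp add: sum.distrib sum_distrib_left algebra_simps)

lemma bf_lin3: "bf U (\<lambda>u u'. a * X u u' + e * Y u u' + k * Z u u') g h = a * bf U X g h + e * bf U Y g h + k * bf U Z g h"
  unfolding bf_def by (simp add: sum.distrib sum_distrib_left algebra_simps)

lemma bf_diag: "finite U \<Longrightarrow> bf U (\<lambda>u u'. if u = u' then \<mu> u else 0) g h = (\<Sum>u\<in>U. \<mu> u * g u * h u)"
  unfolding bf_def by (simp add: if_distrib if_distribR sum.delta cong: if_cong)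

lemma bf_add: "bf U W (\<lambda>u. g u + h u) (\<lambda>u. g u + h u) = bf U W g g + bf U W g h + bf U W h g + bf U W h h"
  unfolding bf_def by (simp add: sum.distrib algebra_simps)

lemma bf_sym:
  assumes "\<And>u u'. u \<in> U \<Longrightarrow> u' \<in> U \<Longrightarrow> W u u' = W u' u"
  shows "bf U W h g = bf U W g h"
proof -
  have "bf U W h g = (\<Sum>u'\<in>U. \<Sum>u\<in>U. W u u' * h u * g u')" unfolding bf_def by (rule sum.swap)
  also have "\<dots> = bf U W g h" unfolding bf_def
    by (intro sum.cong refl) (simp add: assms mult_ac)
  finally show ?thesis .
qed

lemma Phi_lin2: "Phi U V W1 (\<lambda>v v'. a * X v v' + e * Y v v') f = a * Phi U V W1 X f + e * Phi U V W1 Y f"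
  unfolding Phi_def by (simp add: sum.distrib sum_distrib_left algebra_simps)

lemma Phi_lin2_3: "Phi U V W1 (\<lambda>v v'. a * X v v' + e * Y v v' + k * Z v v') f = a * Phi U V W1 X f + e * Phi U V W1 Y f + k * Phi U V W1 Z f"
  unfolding Phi_def by (simp add: sum.distrib sum_distrib_left algebra_simps)

lemma Phi_lin1: "Phi U V (\<lambda>u u'. a * X u u' + e * Y u u') W2 f = a * Phi U V X W2 f + e * Phi U V Y W2 f"
  unfolding Phi_def bf_lin by (simp add: sum.distrib sum_distrib_left algebra_simps)

lemma Phi_lin1_3: "Phi U V (\<lambda>u u'. a * X u u' + e * Y u u' + k * Z u u') W2 f = a * Phi U V X W2 f + e * Phi U V Y W2 f + k * Phi U V Z W2 f"
  unfolding Phi_def bf_lin3 by (simp add: sum.distrib sum_distrib_left algebra_simps)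

lemma Phi_swap: "Phi U V W1 W2 f = (\<Sum>u\<in>U. \<Sum>u'\<in>U. W1 u u' * bf V W2 (\<lambda>v. f (u, v)) (\<lambda>v. f (u', v)))"
proof -
  have "Phi U V W1 W2 f = (\<Sum>v\<in>V. \<Sum>v'\<in>V. \<Sum>u\<in>U. \<Sum>u'\<in>U. W1 u u' * W2 v v' * f (u, v) * f (u', v'))"
    unfolding Phi_def bf_def by (simp add: sum_distrib_left mult_ac)
  also have "\<dots> = (\<Sum>v\<in>V. \<Sum>u\<in>U. \<Sum>v'\<in>V. \<Sum>u'\<in>U. W1 u u' * W2 v v' * f (u, v) * f (u', v'))"
    by (intro sum.cong refl sum.swap)
  also have "\<dots> = (\<Sum>u\<in>U. \<Sum>v\<in>V. \<Sum>v'\<in>V. \<Sum>u'\<in>U. W1 u u' * W2 v v' * f (u, v) * f (u', v'))"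
    by (rule sum.swap)
  also have "\<dots> = (\<Sum>u\<in>U. \<Sum>v\<in>V. \<Sum>u'\<in>U. \<Sum>v'\<in>V. W1 u u' * W2 v v' * f (u, v) * f (u', v'))"
    by (intro sum.cong refl sum.swap)
  also have "\<dots> = (\<Sum>u\<in>U. \<Sum>u'\<in>U. \<Sum>v\<in>V. \<Sum>v'\<in>V. W1 u u' * W2 v v' * f (u, v) * f (u', v'))"
    by (intro sum.cong refl sum.swap)
  also have "\<dots> = (\<Sum>u\<in>U. \<Sum>u'\<in>U. W1 u u' * bf V W2 (\<lambda>v. f (u, v)) (\<lambda>v. f (u', v)))"
    unfolding bf_def by (simp add: sum_distrib_left mult_ac)
  finally show ?thesis .
qed

lemma sum_times_split: "sum G (U \<times> V) = (\<Sum>u\<in>U. \<Sum>v\<in>V. G (u, v))"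
  by (simp add: sum.cartesian_product)

lemma Phi_prod:
  assumes "finite U" "finite V"
  shows "Phi U V W1 W2 f = (\<Sum>p\<in>U \<times> V. \<Sum>q\<in>U \<times> V. W1 (fst p) (fst q) * W2 (snd p) (snd q) * f p * f q)"
proof -
  have "(\<Sum>p\<in>U \<times> V. \<Sum>q\<in>U \<times> V. W1 (fst p) (fst q) * W2 (snd p) (snd q) * f p * f q)
     = (\<Sum>u\<in>U. \<Sum>v\<in>V. \<Sum>q\<in>U \<times> V. W1 u (fst q) * W2 v (snd q) * f (u,v) * f q)"
    by (simp add: sum_times_split)
  also have "\<dots> = (\<Sum>u\<in>U. \<Sum>v\<in>V. \<Sum>u'\<in>U. \<Sum>v'\<in>V. W1 u u' * W2 v v' * f (u,v) * f (u',v'))"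
    by (simp add: sum_times_split)
  also have "\<dots> = (\<Sum>u\<in>U. \<Sum>u'\<in>U. \<Sum>v\<in>V. \<Sum>v'\<in>V. W1 u u' * W2 v v' * f (u, v) * f (u', v'))"
    by (intro sum.cong refl sum.swap)
  also have "\<dots> = Phi U V W1 W2 f"
    unfolding Phi_swap bf_def by (simp add: sum_distrib_left mult_ac)
  finally show ?thesis by simp
qed


definition good :: "'u set \<Rightarrow> ('u \<Rightarrow> real) \<Rightarrow> ('u \<Rightarrow> 'u \<Rightarrow> real) \<Rightarrow> bool" where
  "good U \<mu> A \<longleftrightarrow> finite U \<and> (\<forall>u\<in>U. \<mu> u \<ge> 0) \<and> sum \<mu> U = 1 \<and> (\<forall>u\<in>U. \<forall>w\<in>U. A u w \<ge> 0)
     \<and> (\<forall>u\<in>U. A u u \<ge> 1/2) \<and> (\<forall>u\<in>U. sum (A u) U = 1) \<and> (\<forall>u\<in>U. \<forall>w\<in>U. \<mu> u * A u w = \<mu> w * A w u)"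

lemma row_collapse1:
  fixes \<nu> G :: "'v \<Rightarrow> real" and B :: "'v \<Rightarrow> 'v \<Rightarrow> real"
  assumes "\<And>v. v \<in> V \<Longrightarrow> sum (B v) V = 1"
  shows "(\<Sum>v\<in>V. \<Sum>w\<in>V. \<nu> v * B v w * G v) = (\<Sum>v\<in>V. \<nu> v * G v)"
proof (rule sum.cong[OF refl])
  fix v assume v: "v \<in> V"
  have "(\<Sum>w\<in>V. \<nu> v * B v w * G v) = \<nu> v * G v * (\<Sum>w\<in>V. B v w)"
    by (simp add: sum_distrib_left sum_distrib_right mult_ac)
  then show "(\<Sum>w\<in>V. \<nu> v * B v w * G v) = \<nu> v * G v" using assms[OF v] by simp
qed

lemma row_collapse2:
  fixes \<nu> G :: "'v \<Rightarrow> real" and B :: "'v \<Rightarrow> 'v \<Rightarrow> real"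
  assumes "\<And>v. v \<in> V \<Longrightarrow> sum (B v) V = 1"
    and rev: "\<And>v w. v \<in> V \<Longrightarrow> w \<in> V \<Longrightarrow> \<nu> v * B v w = \<nu> w * B w v"
  shows "(\<Sum>v\<in>V. \<Sum>w\<in>V. \<nu> v * B v w * G w) = (\<Sum>v\<in>V. \<nu> v * G v)"
proof -
  have "(\<Sum>v\<in>V. \<Sum>w\<in>V. \<nu> v * B v w * G w) = (\<Sum>v\<in>V. \<Sum>w\<in>V. \<nu> w * B w v * G w)"
    by (intro sum.cong refl) (simp add: rev)
  also have "\<dots> = (\<Sum>w\<in>V. \<Sum>v\<in>V. \<nu> w * B w v * G w)" by (rule sum.swap)
  finally show ?thesis using row_collapse1[OF assms(1)] by simp
qed

lemma quad_dir_var: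
  assumes g: "good U \<mu> A"
  shows "bf U (\<lambda>u u'. (1 - c) * (if u = u' then \<mu> u else 0) + (-1) * (\<mu> u * A u u') + c * (\<mu> u * \<mu> u')) h h
       = dirichlet U \<mu> A h - c * var U \<mu> h"
proof -
  have fin: "finite U" and s: "sum \<mu> U = 1" and rows: "\<And>x. x \<in> U \<Longrightarrow> (\<Sum>y\<in>U. A x y) = 1"
    and rev: "\<And>x y. x \<in> U \<Longrightarrow> y \<in> U \<Longrightarrow> \<mu> x * A x y = \<mu> y * A y x"
    using g unfolding good_def by auto
  have d: "dirichlet U \<mu> A h = (\<Sum>x\<in>U. \<mu> x * h x ^ 2) - (\<Sum>x\<in>U. \<Sum>y\<in>U. \<mu> x * A x y * h x * h y)"
    by (rule dirichlet_eq[OF fin rows rev])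
  show ?thesis
    unfolding bf_lin3 bf_diag[OF fin] d var_eq2[OF fin s]
    by (simp add: bf_def power2_eq_square algebra_simps)
qed

lemma bf_psd_good:
  assumes g: "good U \<mu> A" and c: "\<And>h. dirichlet U \<mu> A h \<ge> c * var U \<mu> h"
  shows "bf U (\<lambda>u u'. (1 - c) * (if u = u' then \<mu> u else 0) + (-1) * (\<mu> u * A u u') + c * (\<mu> u * \<mu> u')) h h \<ge> 0"
  unfolding quad_dir_var[OF g] using c[of h] by simp

lemma lazy_psd:
  fixes \<nu> h :: "'v \<Rightarrow> real" and B :: "'v \<Rightarrow> 'v \<Rightarrow> real"
  assumes g: "good V \<nu> B"
  shows "bf V (\<lambda>v v'. 1 * (\<nu> v * B v v') + (-1) * (\<nu> v * \<nu> v')) h h \<ge> 0"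
proof -
  have fin: "finite V" and s: "sum \<nu> V = 1" and rows: "\<And>x. x \<in> V \<Longrightarrow> sum (B x) V = 1"
    and rev: "\<And>x y. x \<in> V \<Longrightarrow> y \<in> V \<Longrightarrow> \<nu> x * B x y = \<nu> y * B y x"
    and nn: "\<And>v. v \<in> V \<Longrightarrow> \<nu> v \<ge> 0" and Bnn: "\<And>v w. v \<in> V \<Longrightarrow> w \<in> V \<Longrightarrow> B v w \<ge> 0"
    and lz: "\<And>v. v \<in> V \<Longrightarrow> B v v \<ge> 1/2"
    using g unfolding good_def by auto
  define m where "m = (\<Sum>v\<in>V. \<nu> v * h v)"
  have "(\<Sum>v\<in>V. \<Sum>w\<in>V. \<nu> v * B v w * ((h v - m) * (h w - m))) \<ge> 0"
  proof (rule lazy_weighted_nonneg[OF fin nn Bnn lz rows rev])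
    fix v w
    have "2 * ((h v - m) * (h w - m)) + (h v - m) * (h v - m) + (h w - m) * (h w - m) = ((h v - m) + (h w - m))^2"
      by (simp add: power2_eq_square algebra_simps)
    then show "2 * ((h v - m) * (h w - m)) + (h v - m) * (h v - m) + (h w - m) * (h w - m) \<ge> 0" by simp
  next
    fix v :: 'v show "0 \<le> (h v - m) * (h v - m)" by (rule zero_le_square)
  qed
  moreover have "(\<Sum>v\<in>V. \<Sum>w\<in>V. \<nu> v * B v w * ((h v - m) * (h w - m)))
     = (\<Sum>v\<in>V. \<Sum>w\<in>V. \<nu> v * B v w * h v * h w) - m * (\<Sum>v\<in>V. \<Sum>w\<in>V. \<nu> v * B v w * h w)
        - m * (\<Sum>v\<in>V. \<Sum>w\<in>V. \<nu> v * B v w * h v) + m^2 * (\<Sum>v\<in>V. \<Sum>w\<in>V. \<nu> v * B v w * 1)"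
    by (simp add: sum_subtractf sum.distrib sum_distrib_left algebra_simps power2_eq_square)
  moreover have "(\<Sum>v\<in>V. \<Sum>w\<in>V. \<nu> v * B v w * h w) = m"
    unfolding m_def by (rule row_collapse2[OF rows rev])
  moreover have "(\<Sum>v\<in>V. \<Sum>w\<in>V. \<nu> v * B v w * h v) = m"
    unfolding m_def by (rule row_collapse1[OF rows])
  moreover have "(\<Sum>v\<in>V. \<Sum>w\<in>V. \<nu> v * B v w * 1) = 1"
    using row_collapse1[OF rows, where \<nu>=\<nu> and G="\<lambda>_. 1"] s by simp
  moreover have "bf V (\<lambda>v v'. 1 * (\<nu> v * B v v') + (-1) * (\<nu> v * \<nu> v')) h h
      = (\<Sum>v\<in>V. \<Sum>w\<in>V. \<nu> v * B v w * h v * h w) - m^2"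
    unfolding bf_lin by (simp add: bf_def m_def power2_eq_square sum_product algebra_simps)
  ultimately show ?thesis by (simp add: power2_eq_square)
qed


lemma bf_D_diag:
  fixes \<mu> X :: "'u \<Rightarrow> real"
  assumes "u \<in> U" "finite U"
  shows "(\<Sum>u'\<in>U. (if u = u' then \<mu> u else 0) * X u') = \<mu> u * X u"
proof -
  have "(\<Sum>u'\<in>U. (if u = u' then \<mu> u else 0) * X u') = (\<Sum>u'\<in>U. if u = u' then \<mu> u * X u else 0)"
    by (intro sum.cong) auto
  also have "\<dots> = \<mu> u * X u" using assms by (simp add: sum.delta)
  finally show ?thesis .
qed

lemma product_bound:
  fixes \<mu> :: "'u \<Rightarrow> real" and A :: "'u \<Rightarrow> 'u \<Rightarrow> real" and \<nu> :: "'v \<Rightarrow> real" and B :: "'v \<Rightarrow> 'v \<Rightarrow> real"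
    and f :: "'u \<times> 'v \<Rightarrow> real"
  assumes gA: "good U \<mu> A" and gB: "good V \<nu> B" and c0: "c \<ge> 0"
    and hA: "\<And>h. dirichlet U \<mu> A h \<ge> c * var U \<mu> h" and hB: "\<And>h. dirichlet V \<nu> B h \<ge> c * var V \<nu> h"
  shows "dirichlet (U \<times> V) (\<lambda>p. \<mu> (fst p) * \<nu> (snd p)) (\<lambda>p q. A (fst p) (fst q) * B (snd p) (snd q)) f
       \<ge> c * var (U \<times> V) (\<lambda>p. \<mu> (fst p) * \<nu> (snd p)) f"
proof -
  have finU: "finite U" and sU: "sum \<mu> U = 1" and rowsA: "\<And>x. x \<in> U \<Longrightarrow> sum (A x) U = 1"
    and revA: "\<And>x y. x \<in> U \<Longrightarrow> y \<in> U \<Longrightarrow> \<mu> x * A x y = \<mu> y * A y x"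
    using gA unfolding good_def by auto
  have finV: "finite V" and sV: "sum \<nu> V = 1" and rowsB: "\<And>x. x \<in> V \<Longrightarrow> sum (B x) V = 1"
    and revB: "\<And>x y. x \<in> V \<Longrightarrow> y \<in> V \<Longrightarrow> \<nu> x * B x y = \<nu> y * B y x"
    and nnB: "\<And>v. v \<in> V \<Longrightarrow> \<nu> v \<ge> 0" and BnnB: "\<And>v w. v \<in> V \<Longrightarrow> w \<in> V \<Longrightarrow> B v w \<ge> 0"
    and lzB: "\<And>v. v \<in> V \<Longrightarrow> B v v \<ge> 1/2"
    using gB unfolding good_def by auto
  have nnU: "\<And>u. u \<in> U \<Longrightarrow> \<mu> u \<ge> 0" using gA unfolding good_def by auto
  define D1 where "D1 = (\<lambda>u u'. if u = u' then \<mu> u else (0::real))"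
  define A1 where "A1 = (\<lambda>u u'. \<mu> u * A u u')"
  define M1 where "M1 = (\<lambda>u u'. \<mu> u * \<mu> u')"
  define D2 where "D2 = (\<lambda>v v'. if v = v' then \<nu> v else (0::real))"
  define B2 where "B2 = (\<lambda>v v'. \<nu> v * B v v')"
  define M2 where "M2 = (\<lambda>v v'. \<nu> v * \<nu> v')"
  define mu2 where "mu2 = (\<lambda>p. \<mu> (fst p) * \<nu> (snd p))"
  define K where "K = (\<lambda>p q. A (fst p) (fst q) * B (snd p) (snd q))"
  have fin: "finite (U \<times> V)" using finU finV by simp
  have rowsK: "(\<Sum>q\<in>U \<times> V. K p q) = 1" if "p \<in> U \<times> V" for p
  proof -
    have "(\<Sum>q\<in>U \<times> V. K p q) = (\<Sum>u\<in>U. A (fst p) u) * (\<Sum>v\<in>V. B (snd p) v)"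
      unfolding K_def sum_times_split sum_product by simp
    then show ?thesis using rowsA rowsB that by auto
  qed
  have revK: "mu2 p * K p q = mu2 q * K q p" if "p \<in> U \<times> V" "q \<in> U \<times> V" for p q
  proof -
    have "mu2 p * K p q = (\<mu> (fst p) * A (fst p) (fst q)) * (\<nu> (snd p) * B (snd p) (snd q))"
      unfolding mu2_def K_def by (simp add: mult_ac)
    also have "\<dots> = (\<mu> (fst q) * A (fst q) (fst p)) * (\<nu> (snd q) * B (snd q) (snd p))"
      using revA revB that by auto
    also have "\<dots> = mu2 q * K q p" unfolding mu2_def K_def by (simp add: mult_ac)
    finally show ?thesis .
  qed
  have s2: "sum mu2 (U \<times> V) = 1"
    unfolding mu2_def sum_times_split using sU sV by (simp add: sum_product[symmetric])
  have diagP: "(\<Sum>p\<in>U \<times> V. mu2 p * f p ^ 2) = Phi U V D1 D2 f"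
  proof -
    have "Phi U V D1 D2 f = (\<Sum>p\<in>U \<times> V. \<Sum>q\<in>U \<times> V. (if p = q then mu2 p else 0) * f p * f q)"
      unfolding Phi_prod[OF finU finV]
      by (intro sum.cong refl) (auto simp: D1_def D2_def mu2_def prod_eq_iff)
    also have "\<dots> = (\<Sum>p\<in>U \<times> V. mu2 p * f p ^ 2)"
      using fin by (simp add: if_distrib if_distribR sum.delta power2_eq_square mult_ac cong: if_cong)
    finally show ?thesis by simp
  qed
  have dK: "dirichlet (U \<times> V) mu2 K f = (\<Sum>x\<in>U \<times> V. mu2 x * f x ^ 2) - (\<Sum>x\<in>U \<times> V. \<Sum>y\<in>U \<times> V. mu2 x * K x y * f x * f y)"
    by (rule dirichlet_eq[OF fin rowsK revK])
  have E: "dirichlet (U \<times> V) mu2 K f = Phi U V D1 D2 f - Phi U V A1 B2 f"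
    unfolding dK diagP
    unfolding Phi_prod[OF finU finV] by (simp add: mu2_def K_def A1_def B2_def mult_ac)
  have vK: "var (U \<times> V) mu2 f = (\<Sum>x\<in>U \<times> V. mu2 x * f x ^ 2) - (\<Sum>x\<in>U \<times> V. \<Sum>y\<in>U \<times> V. mu2 x * mu2 y * f x * f y)"
    by (rule var_eq2[OF fin s2])
  have Var: "var (U \<times> V) mu2 f = Phi U V D1 D2 f - Phi U V M1 M2 f"
    unfolding vK diagP
    unfolding Phi_prod[OF finU finV] by (simp add: mu2_def M1_def M2_def mult_ac)
  define W where "W = (\<lambda>u u'. (1 - c) * D1 u u' + (-1) * A1 u u' + c * M1 u u')"
  define W' where "W' = (\<lambda>v v'. (1 - c) * D2 v v' + (-1) * B2 v v' + c * M2 v v')"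
  have Wpsd: "bf U W h h \<ge> 0" for h
    using bf_psd_good[OF gA hA] unfolding W_def D1_def A1_def M1_def by simp
  have W'psd: "bf V W' h h \<ge> 0" for h
    using bf_psd_good[OF gB hB] unfolding W'_def D2_def B2_def M2_def by simp
  have Wsym: "W u u' = W u' u" if "u \<in> U" "u' \<in> U" for u u'
    unfolding W_def D1_def A1_def M1_def using revA[OF that] by (simp add: mult_ac)
  have P1: "Phi U V W B2 f \<ge> 0"
    unfolding Phi_def B2_def
  proof (rule lazy_weighted_nonneg[OF finV nnB BnnB lzB rowsB revB])
    fix v show "0 \<le> bf U W (\<lambda>u. f (u, v)) (\<lambda>u. f (u, v))" by (rule Wpsd)
  next
    fix v w
    have "bf U W (\<lambda>u. f (u, v) + f (u, w)) (\<lambda>u. f (u, v) + f (u, w))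
      = 2 * bf U W (\<lambda>u. f (u, v)) (\<lambda>u. f (u, w)) + bf U W (\<lambda>u. f (u, v)) (\<lambda>u. f (u, v)) + bf U W (\<lambda>u. f (u, w)) (\<lambda>u. f (u, w))"
      unfolding bf_add using bf_sym[of U W, OF Wsym] by simp
    then show "0 \<le> 2 * bf U W (\<lambda>u. f (u, v)) (\<lambda>u. f (u, w)) + bf U W (\<lambda>u. f (u, v)) (\<lambda>u. f (u, v)) + bf U W (\<lambda>u. f (u, w)) (\<lambda>u. f (u, w))"
      using Wpsd by metis
  qed
  have P2: "Phi U V D1 W' f \<ge> 0"
  proof -
    have "Phi U V D1 W' f = (\<Sum>u\<in>U. \<mu> u * bf V W' (\<lambda>v. f (u, v)) (\<lambda>v. f (u, v)))"
      unfolding Phi_swap D1_def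
      by (intro sum.cong refl) (rule bf_D_diag, assumption, rule finU)
    also have "\<dots> \<ge> 0" by (intro sum_nonneg mult_nonneg_nonneg nnU W'psd)
    finally show ?thesis .
  qed
  define F where "F = (\<lambda>v. \<Sum>u\<in>U. \<mu> u * f (u, v))"
  define g where "g = (\<lambda>p. f p - F (snd p))"
  have bfproj: "bf U (\<lambda>u u'. 1 * D1 u u' + (-1) * M1 u u') (\<lambda>u. f (u, v)) (\<lambda>u. f (u, v'))
      = bf U D1 (\<lambda>u. g (u, v)) (\<lambda>u. g (u, v'))" for v v'
  proof -
    have "bf U (\<lambda>u u'. 1 * D1 u u' + (-1) * M1 u u') (\<lambda>u. f (u, v)) (\<lambda>u. f (u, v'))
       = (\<Sum>u\<in>U. \<mu> u * f (u, v) * f (u, v')) - F v * F v'"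
    proof -
      have m1: "bf U M1 (\<lambda>u. f (u, v)) (\<lambda>u. f (u, v')) = F v * F v'"
        unfolding bf_def M1_def F_def sum_product by (simp add: mult_ac)
      show ?thesis unfolding bf_lin m1 unfolding D1_def bf_diag[OF finU] by simp
    qed
    moreover have "bf U D1 (\<lambda>u. g (u, v)) (\<lambda>u. g (u, v'))
       = (\<Sum>u\<in>U. \<mu> u * f (u, v) * f (u, v')) - F v' * (\<Sum>u\<in>U. \<mu> u * f (u, v)) - F v * (\<Sum>u\<in>U. \<mu> u * f (u, v')) + F v * F v' * sum \<mu> U"
      unfolding D1_def bf_diag[OF finU] g_def
      by (simp add: sum_subtractf sum.distrib sum_distrib_left sum_distrib_right algebra_simps)
    ultimately show ?thesis using sU by (simp add: F_def)
  qed
  have P3: "Phi U V (\<lambda>u u'. 1 * D1 u u' + (-1) * M1 u u') (\<lambda>v v'. 1 * B2 v v' + (-1) * M2 v v') f \<ge> 0"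
  proof -
    have "Phi U V (\<lambda>u u'. 1 * D1 u u' + (-1) * M1 u u') (\<lambda>v v'. 1 * B2 v v' + (-1) * M2 v v') f
       = Phi U V D1 (\<lambda>v v'. 1 * B2 v v' + (-1) * M2 v v') g"
      unfolding Phi_def bfproj by simp
    also have "\<dots> = (\<Sum>u\<in>U. \<mu> u * bf V (\<lambda>v v'. 1 * B2 v v' + (-1) * M2 v v') (\<lambda>v. g (u, v)) (\<lambda>v. g (u, v)))"
      unfolding Phi_swap D1_def
      by (intro sum.cong refl) (rule bf_D_diag, assumption, rule finU)
    also have "\<dots> \<ge> 0"
    proof (intro sum_nonneg mult_nonneg_nonneg nnU)
      fix u
      show "0 \<le> bf V (\<lambda>v v'. 1 * B2 v v' + (-1) * M2 v v') (\<lambda>v. g (u, v)) (\<lambda>v. g (u, v))"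
        using lazy_psd[OF gB] unfolding B2_def M2_def by simp
    qed
    finally show ?thesis .
  qed
  have dec: "Phi U V D1 D2 f - Phi U V A1 B2 f - c * (Phi U V D1 D2 f - Phi U V M1 M2 f)
     = Phi U V W B2 f + Phi U V D1 W' f + c * Phi U V (\<lambda>u u'. 1 * D1 u u' + (-1) * M1 u u') (\<lambda>v v'. 1 * B2 v v' + (-1) * M2 v v') f"
    unfolding W_def W'_def Phi_lin1_3 Phi_lin2_3 Phi_lin1 Phi_lin2
    by (simp add: algebra_simps)
  have "0 \<le> Phi U V W B2 f + Phi U V D1 W' f + c * Phi U V (\<lambda>u u'. 1 * D1 u u' + (-1) * M1 u u') (\<lambda>v v'. 1 * B2 v v' + (-1) * M2 v v') f"
    using P1 P2 P3 c0 by simp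
  then have "c * var (U \<times> V) mu2 f \<le> dirichlet (U \<times> V) mu2 K f"
    unfolding E Var using dec by linarith
  then show ?thesis unfolding mu2_def K_def .
qed


lemma path_bound:
  fixes \<pi> :: "'x \<Rightarrow> real" and P :: "'x \<Rightarrow> 'x \<Rightarrow> real"
  assumes Pnn: "\<And>x y. x \<in> \<Omega> \<Longrightarrow> y \<in> \<Omega> \<Longrightarrow> P x y \<ge> 0"
    and edge: "\<And>z y. z \<in> \<Omega> \<Longrightarrow> y \<in> \<Omega> \<Longrightarrow> P z y > 0 \<Longrightarrow> \<bar>f z - f y\<bar> \<le> s"
  shows "x \<in> \<Omega> \<Longrightarrow> y \<in> \<Omega> \<Longrightarrow> mpow \<Omega> P n x y > 0 \<Longrightarrow> \<bar>f x - f y\<bar> \<le> real n * s"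
proof (induction n arbitrary: y)
  case 0
  then show ?case by (simp split: if_splits)
next
  case (Suc n)
  have "0 < (\<Sum>z\<in>\<Omega>. mpow \<Omega> P n x z * P z y)" using Suc.prems by simp
  then obtain z where z: "z \<in> \<Omega>" and pos: "mpow \<Omega> P n x z * P z y > 0"
    by (metis (no_types, lifting) not_less sum_nonpos)
  have "P z y \<ge> 0" using Pnn z Suc.prems by auto
  then have pz: "P z y > 0" and mz: "mpow \<Omega> P n x z > 0" using pos
    by (auto simp: zero_less_mult_iff)
  have "\<bar>f x - f y\<bar> \<le> \<bar>f x - f z\<bar> + \<bar>f z - f y\<bar>" by linarith
  also have "\<dots> \<le> real n * s + s" using Suc.IH[OF Suc.prems(1) z mz] Suc.prems(1) edge[OF z Suc.prems(2) pz] by (intro add_mono) auto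
  finally show ?case by (simp add: algebra_simps)
qed

lemma var_le_moment:
  assumes fin: "finite Z" and s: "sum \<mu> Z = 1"
  shows "var Z \<mu> g \<le> (\<Sum>x\<in>Z. \<mu> x * (g x - c)^2)"
proof -
  define m where "m = (\<Sum>x\<in>Z. \<mu> x * g x)"
  have "(\<Sum>x\<in>Z. \<mu> x * (g x - c)^2) = (\<Sum>x\<in>Z. \<mu> x * g x ^ 2) - 2 * c * m + c^2 * sum \<mu> Z"
    unfolding m_def by (simp add: power2_diff sum_subtractf sum.distrib sum_distrib_left sum_distrib_right algebra_simps)
  moreover have "var Z \<mu> g = (\<Sum>x\<in>Z. \<mu> x * g x ^ 2) - m^2" unfolding m_def by (rule var_eq[OF fin s])
  moreover have "0 \<le> (m - c)^2" by simp
  moreover have "(m - c)^2 = m^2 - 2 * c * m + c^2" by (simp add: power2_diff algebra_simps)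
  ultimately show ?thesis using s by simp
qed

lemma irreducible_poincare:
  fixes \<pi> :: "'x \<Rightarrow> real" and P :: "'x \<Rightarrow> 'x \<Rightarrow> real"
  assumes fin: "finite \<Omega>" and pm: "prob_mass_pos \<Omega> \<pi>" and st: "stochastic_on \<Omega> P"
    and irr: "irreducible_on \<Omega> P"
  shows "\<exists>\<kappa>>0. \<forall>f. dirichlet \<Omega> \<pi> P f \<ge> \<kappa> * var \<Omega> \<pi> f"
proof -
  have pos: "\<And>x. x \<in> \<Omega> \<Longrightarrow> \<pi> x > 0" and s1: "sum \<pi> \<Omega> = 1" using pm unfolding prob_mass_pos_def by auto
  have Pnn: "\<And>x y. x \<in> \<Omega> \<Longrightarrow> y \<in> \<Omega> \<Longrightarrow> P x y \<ge> 0" using st unfolding stochastic_on_def by auto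
  define E where "E = {\<pi> x * P x y | x y. x \<in> \<Omega> \<and> y \<in> \<Omega> \<and> P x y > 0}"
  define \<delta> where "\<delta> = Min (insert 1 E)"
  have finE: "finite E"
  proof -
    have "E \<subseteq> (\<lambda>(x,y). \<pi> x * P x y) ` (\<Omega> \<times> \<Omega>)" unfolding E_def by auto
    then show "finite E" using fin finite_subset by blast
  qed
  have dpos: "\<delta> > 0"
    unfolding \<delta>_def using finE by (auto simp: E_def intro!: mult_pos_pos pos)
  have dle: "\<delta> \<le> \<pi> x * P x y" if "x \<in> \<Omega>" "y \<in> \<Omega>" "P x y > 0" for x y
    unfolding \<delta>_def using finE that by (intro Min_le) (auto simp: E_def)
  define n where "n x y = (SOME k. mpow \<Omega> P k x y > 0)" for x y
  have npos: "mpow \<Omega> P (n x y) x y > 0" if "x \<in> \<Omega>" "y \<in> \<Omega>" for x y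
    unfolding n_def using irr that unfolding irreducible_on_def by (metis someI_ex)
  define N where "N = (\<Sum>x\<in>\<Omega>. \<Sum>y\<in>\<Omega>. n x y)"
  have nle: "n x y \<le> N" if "x \<in> \<Omega>" "y \<in> \<Omega>" for x y
  proof -
    have "n x y \<le> (\<Sum>y\<in>\<Omega>. n x y)" by (rule member_le_sum) (use that fin in auto)
    also have "\<dots> \<le> N" unfolding N_def by (rule member_le_sum[where f="\<lambda>x. \<Sum>y\<in>\<Omega>. n x y"]) (use that fin in auto)
    finally show ?thesis .
  qed
  define \<kappa> where "\<kappa> = \<delta> / (2 * real N ^ 2 + 1)"
  have h0: "0 \<le> real N ^ 2" by simp
  have h1: "0 < 2 * real N ^ 2 + 1" using h0 by linarith
  have kpos: "\<kappa> > 0" unfolding \<kappa>_def using dpos h1 by (rule divide_pos_pos)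
  have "dirichlet \<Omega> \<pi> P f \<ge> \<kappa> * var \<Omega> \<pi> f" for f
  proof (cases "\<Omega> = {}")
    case True then show ?thesis by (simp add: dirichlet_def var_def)
  next
    case False
    then obtain x0 where x0: "x0 \<in> \<Omega>" by auto
    define D where "D = (\<Sum>x\<in>\<Omega>. \<Sum>y\<in>\<Omega>. \<pi> x * P x y * (f x - f y)^2)"
    have tnn: "0 \<le> \<pi> x * P x y * (f x - f y)^2" if "x \<in> \<Omega>" "y \<in> \<Omega>" for x y
      using pos[OF that(1)] Pnn[OF that] by simp
    have Dnn: "D \<ge> 0" unfolding D_def by (intro sum_nonneg) (use tnn in auto)
    have Dir: "dirichlet \<Omega> \<pi> P f = D / 2" unfolding dirichlet_def D_def by simp
    define s where "s = sqrt (D / \<delta>)"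
    have edge: "\<bar>f z - f y\<bar> \<le> s" if "z \<in> \<Omega>" "y \<in> \<Omega>" "P z y > 0" for z y
    proof -
      have "\<pi> z * P z y * (f z - f y)^2 \<le> (\<Sum>y\<in>\<Omega>. \<pi> z * P z y * (f z - f y)^2)"
        by (rule member_le_sum) (use that fin tnn in auto)
      also have "\<dots> \<le> D" unfolding D_def
        by (rule member_le_sum[where f="\<lambda>z. \<Sum>y\<in>\<Omega>. \<pi> z * P z y * (f z - f y)^2"])
           (use that fin tnn in \<open>auto intro: sum_nonneg\<close>)
      finally have a: "\<pi> z * P z y * (f z - f y)^2 \<le> D" .
      have "\<delta> * (f z - f y)^2 \<le> \<pi> z * P z y * (f z - f y)^2"
        by (rule mult_right_mono) (use dle[OF that] in auto)
      then have "\<delta> * (f z - f y)^2 \<le> D" using a by linarith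
      then have "(f z - f y)^2 \<le> D / \<delta>" using dpos by (simp add: field_simps)
      from real_sqrt_le_mono[OF this] show ?thesis unfolding s_def by simp
    qed
    have bnd: "(f x - f x0)^2 \<le> real N ^ 2 * (D / \<delta>)" if x: "x \<in> \<Omega>" for x
    proof -
      have "\<bar>f x - f x0\<bar> \<le> real (n x x0) * s"
        by (rule path_bound[OF Pnn edge x x0 npos[OF x x0]]) auto
      also have "\<dots> \<le> real N * s" using nle[OF x x0] Dnn dpos unfolding s_def by (intro mult_right_mono) auto
      finally have "\<bar>f x - f x0\<bar> \<le> real N * s" .
      then have "\<bar>f x - f x0\<bar>^2 \<le> (real N * s)^2"
        by (intro power_mono) auto
      then have "(f x - f x0)^2 \<le> (real N * s)^2" by simp
      also have "\<dots> = real N ^ 2 * (D / \<delta>)" unfolding s_def using Dnn dpos by (simp add: power_mult_distrib)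
      finally show ?thesis .
    qed
    have "var \<Omega> \<pi> f \<le> (\<Sum>x\<in>\<Omega>. \<pi> x * (f x - f x0)^2)" by (rule var_le_moment[OF fin s1])
    also have "\<dots> \<le> (\<Sum>x\<in>\<Omega>. \<pi> x * (real N ^ 2 * (D / \<delta>)))"
      by (intro sum_mono mult_left_mono bnd) (auto intro: less_imp_le pos)
    also have "\<dots> = (\<Sum>x\<in>\<Omega>. \<pi> x) * (real N ^ 2 * (D / \<delta>))" by (rule sum_distrib_right[symmetric])
    also have "\<dots> = real N ^ 2 * (D / \<delta>)" using s1 by simp
    finally have v: "var \<Omega> \<pi> f \<le> real N ^ 2 * (D / \<delta>)" .
    have "\<kappa> * var \<Omega> \<pi> f \<le> \<kappa> * (real N ^ 2 * (D / \<delta>))" using v kpos by (intro mult_left_mono) auto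
    also have "\<dots> = D * (real N ^ 2 / (2 * real N ^ 2 + 1))" unfolding \<kappa>_def using dpos by (simp add: field_simps)
    also have "\<dots> \<le> D * (1/2)"
      by (intro mult_left_mono Dnn) (use h1 in \<open>simp add: divide_le_eq\<close>)
    finally show ?thesis unfolding Dir by simp
  qed
  then show ?thesis using kpos by blast
qed


lemma dirichlet_nonneg:
  assumes "\<And>x. x \<in> Z \<Longrightarrow> \<mu> x \<ge> 0" "\<And>x y. x \<in> Z \<Longrightarrow> y \<in> Z \<Longrightarrow> Q x y \<ge> 0"
  shows "dirichlet Z \<mu> Q g \<ge> 0"
  unfolding dirichlet_def using assms by (auto intro!: sum_nonneg mult_nonneg_nonneg)

lemma var_nonneg:
  assumes "\<And>x. x \<in> Z \<Longrightarrow> \<mu> x \<ge> 0"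
  shows "var Z \<mu> g \<ge> 0"
  unfolding var_def using assms by (auto intro!: sum_nonneg mult_nonneg_nonneg)

lemma gap_bdd:
  assumes "\<And>x. x \<in> Z \<Longrightarrow> \<mu> x \<ge> 0" "\<And>x y. x \<in> Z \<Longrightarrow> y \<in> Z \<Longrightarrow> Q x y \<ge> 0"
  shows "bdd_below {dirichlet Z \<mu> Q f / var Z \<mu> f | f. var Z \<mu> f \<noteq> 0}"
proof (rule bdd_belowI[where m=0])
  fix x assume "x \<in> {dirichlet Z \<mu> Q f / var Z \<mu> f | f. var Z \<mu> f \<noteq> 0}"
  then obtain f where x: "x = dirichlet Z \<mu> Q f / var Z \<mu> f" by blast
  show "0 \<le> x" unfolding x by (rule divide_nonneg_nonneg[OF dirichlet_nonneg[OF assms] var_nonneg[OF assms(1)]])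
qed

lemma gap_lower:
  assumes "\<And>x. x \<in> Z \<Longrightarrow> \<mu> x \<ge> 0" "\<And>x y. x \<in> Z \<Longrightarrow> y \<in> Z \<Longrightarrow> Q x y \<ge> 0"
  shows "spectral_gap Z \<mu> Q * var Z \<mu> f \<le> dirichlet Z \<mu> Q f"
proof (cases "var Z \<mu> f = 0")
  case True then show ?thesis using dirichlet_nonneg[OF assms, where g=f] by simp
next
  case False
  have "var Z \<mu> f \<ge> 0" by (rule var_nonneg[OF assms(1)])
  then have vp: "var Z \<mu> f > 0" using False by linarith
  have mem: "dirichlet Z \<mu> Q f / var Z \<mu> f \<in> {dirichlet Z \<mu> Q f / var Z \<mu> f | f. var Z \<mu> f \<noteq> 0}"
    using False by blast
  have "spectral_gap Z \<mu> Q \<le> dirichlet Z \<mu> Q f / var Z \<mu> f"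
    unfolding spectral_gap_def by (rule cInf_lower[OF mem gap_bdd[OF assms]])
  then show ?thesis using vp by (simp add: le_divide_eq)
qed

context
  fixes d :: nat and X :: "nat \<Rightarrow> 'a set" and \<pi> :: "(nat \<Rightarrow> 'a) \<Rightarrow> real"
    and P :: "(nat \<Rightarrow> 'a) \<Rightarrow> (nat \<Rightarrow> 'a) \<Rightarrow> real"
  assumes finX: "\<And>j. j \<in> {1..d} \<Longrightarrow> finite (X j)"
    and pm: "prob_mass_pos (prod_space d X) \<pi>"
    and st: "stochastic_on (prod_space d X) P"
    and lz: "lazy_on (prod_space d X) P"
    and rv: "reversible_on (prod_space d X) \<pi> P"
begin

lemma finOm: "finite (prod_space d X)"
  unfolding prod_space_def by (rule finite_PiE) (auto simp: finX)

lemma pipos: "x \<in> prod_space d X \<Longrightarrow> \<pi> x > 0" and pisum: "sum \<pi> (prod_space d X) = 1"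
  using pm unfolding prob_mass_pos_def by auto

lemma Pnn: "x \<in> prod_space d X \<Longrightarrow> y \<in> prod_space d X \<Longrightarrow> P x y \<ge> 0"
  and Prows: "x \<in> prod_space d X \<Longrightarrow> (\<Sum>y\<in>prod_space d X. P x y) = 1"
  using st unfolding stochastic_on_def by auto

lemma Plazy: "x \<in> prod_space d X \<Longrightarrow> P x x \<ge> 1/2"
  using lz unfolding lazy_on_def by auto

lemma Prev: "x \<in> prod_space d X \<Longrightarrow> y \<in> prod_space d X \<Longrightarrow> \<pi> x * P x y = \<pi> y * P y x"
  using rv unfolding reversible_on_def by auto

lemma finPiE:
  assumes R: "R \<subseteq> {1..d}" shows "finite (PiE R X)"
proof (rule finite_PiE)
  show "finite R" using R finite_subset by blast
  show "\<And>i. i \<in> R \<Longrightarrow> finite (X i)" using R finX by auto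
qed

lemma Om_ne: "prod_space d X \<noteq> {}"
  using pisum by auto

lemma restr_in: "x \<in> prod_space d X \<Longrightarrow> R \<subseteq> {1..d} \<Longrightarrow> restrict x R \<in> PiE R X"
  unfolding prod_space_def by (auto simp: restrict_PiE_iff PiE_iff)

lemma fib_ne:
  assumes u: "u \<in> PiE R X" and R: "R \<subseteq> {1..d}"
  shows "{x \<in> prod_space d X. restrict x R = u} \<noteq> {}"
proof -
  obtain x0 where x0: "x0 \<in> prod_space d X" using Om_ne by auto
  define x where "x = (\<lambda>i. if i \<in> R then u i else x0 i)"
  have "x \<in> prod_space d X"
    using u x0 R unfolding x_def prod_space_def by (auto simp: PiE_iff extensional_def)
  moreover have "restrict x R = u"
    using u unfolding x_def by (auto simp: PiE_iff extensional_def restrict_def)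
  ultimately show ?thesis by auto
qed

lemma marg_pos:
  assumes u: "u \<in> PiE R X" and R: "R \<subseteq> {1..d}"
  shows "marg (prod_space d X) \<pi> R u > 0"
  unfolding marg_def
  by (rule sum_pos) (use finOm fib_ne[OF u R] pipos in auto)

lemma sum_group_R:
  assumes R: "R \<subseteq> {1..d}"
  shows "(\<Sum>x\<in>prod_space d X. G x) = (\<Sum>u\<in>PiE R X. \<Sum>x\<in>{x \<in> prod_space d X. restrict x R = u}. G x)"
proof -
  have fU: "finite (PiE R X)" using R by (rule finPiE)
  have img: "(\<lambda>x. restrict x R) ` prod_space d X \<subseteq> PiE R X"
    using restr_in[OF _ R] by blast
  show ?thesis using sum.group[OF finOm fU img, of G] by simp
qed

lemma sum_group_R2:
  assumes R: "R \<subseteq> {1..d}"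
  shows "(\<Sum>x\<in>prod_space d X. G x (restrict x R)) = (\<Sum>u\<in>PiE R X. \<Sum>x\<in>{x \<in> prod_space d X. restrict x R = u}. G x u)"
  unfolding sum_group_R[OF R] by (intro sum.cong refl) auto

lemma lift_sum:
  assumes R: "R \<subseteq> {1..d}"
  shows "(\<Sum>x\<in>prod_space d X. \<pi> x * G (restrict x R)) = (\<Sum>u\<in>PiE R X. marg (prod_space d X) \<pi> R u * G u)"
  unfolding sum_group_R2[OF R, where G="\<lambda>x u. \<pi> x * G u"] marg_def
  by (simp add: sum_distrib_right)

definition NN :: "nat set \<Rightarrow> (nat \<Rightarrow> 'a) \<Rightarrow> (nat \<Rightarrow> 'a) \<Rightarrow> real" where
  "NN R u u' = (\<Sum>x\<in>{x \<in> prod_space d X. restrict x R = u}. \<Sum>y\<in>{y \<in> prod_space d X. restrict y R = u'}. \<pi> x * P x y)"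

lemma proj_eq: "proj_chain (prod_space d X) \<pi> P R u u' = NN R u u' / marg (prod_space d X) \<pi> R u"
  unfolding proj_chain_def NN_def by simp

lemma marg_proj:
  assumes "u \<in> PiE R X" "R \<subseteq> {1..d}"
  shows "marg (prod_space d X) \<pi> R u * proj_chain (prod_space d X) \<pi> P R u u' = NN R u u'"
  unfolding proj_eq using marg_pos[OF assms] by simp

lemma NN_sym: "NN R u u' = NN R u' u"
proof -
  have "NN R u u' = (\<Sum>x\<in>{x \<in> prod_space d X. restrict x R = u}. \<Sum>y\<in>{y \<in> prod_space d X. restrict y R = u'}. \<pi> y * P y x)"
    unfolding NN_def by (intro sum.cong refl) (auto simp: Prev)
  also have "\<dots> = NN R u' u" unfolding NN_def by (rule sum.swap)
  finally show ?thesis .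
qed

lemma NN_nonneg: "NN R u u' \<ge> 0"
  unfolding NN_def by (intro sum_nonneg mult_nonneg_nonneg) (auto intro: less_imp_le pipos Pnn)

lemma good_proj:
  assumes R: "R \<subseteq> {1..d}"
  shows "good (PiE R X) (marg (prod_space d X) \<pi> R) (proj_chain (prod_space d X) \<pi> P R)"
proof -
  let ?U = "PiE R X" and ?m = "marg (prod_space d X) \<pi> R" and ?A = "proj_chain (prod_space d X) \<pi> P R"
  have fU: "finite ?U" using R by (rule finPiE)
  have m0: "\<forall>u\<in>?U. ?m u \<ge> 0" using marg_pos[OF _ R] by (auto intro: less_imp_le)
  have ms: "sum ?m ?U = 1"
    using sum_group_R[OF R, of \<pi>] pisum unfolding marg_def by simp
  have A0: "\<forall>u\<in>?U. \<forall>w\<in>?U. ?A u w \<ge> 0"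
    unfolding proj_eq using marg_pos[OF _ R] NN_nonneg by (auto intro: divide_nonneg_pos)
  have rows: "sum (?A u) ?U = 1" if u: "u \<in> ?U" for u
  proof -
    have "(\<Sum>u'\<in>?U. NN R u u') = (\<Sum>x\<in>{x \<in> prod_space d X. restrict x R = u}. \<Sum>u'\<in>?U. \<Sum>y\<in>{y \<in> prod_space d X. restrict y R = u'}. \<pi> x * P x y)"
      unfolding NN_def by (rule sum.swap)
    also have "\<dots> = (\<Sum>x\<in>{x \<in> prod_space d X. restrict x R = u}. \<Sum>y\<in>prod_space d X. \<pi> x * P x y)"
    proof -
      have inner2: "(\<Sum>u'\<in>?U. \<Sum>y\<in>{y \<in> prod_space d X. restrict y R = u'}. \<pi> x * P x y) = (\<Sum>y\<in>prod_space d X. \<pi> x * P x y)" for x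
        by (rule sum_group_R[OF R, symmetric])
      show ?thesis unfolding inner2 ..
    qed
    also have "\<dots> = (\<Sum>x\<in>{x \<in> prod_space d X. restrict x R = u}. \<pi> x)"
      by (intro sum.cong refl) (auto simp: sum_distrib_left[symmetric] Prows)
    also have "\<dots> = ?m u" unfolding marg_def ..
    finally have "(\<Sum>u'\<in>?U. NN R u u') = ?m u" .
    then show ?thesis unfolding proj_eq sum_divide_distrib[symmetric] using marg_pos[OF u R] by simp
  qed
  have lazy: "?A u u \<ge> 1/2" if u: "u \<in> ?U" for u
  proof -
    let ?F = "{x \<in> prod_space d X. restrict x R = u}"
    have fF: "finite ?F" using finOm by simp
    have "(\<Sum>x\<in>?F. \<pi> x * (1/2)) \<le> (\<Sum>x\<in>?F. \<pi> x * P x x)"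
    proof (rule sum_mono)
      fix x assume "x \<in> ?F"
      then have xo: "x \<in> prod_space d X" by simp
      show "\<pi> x * (1/2) \<le> \<pi> x * P x x"
        using Plazy[OF xo] pipos[OF xo] by (intro mult_left_mono) auto
    qed
    also have "\<dots> \<le> NN R u u" unfolding NN_def
    proof (intro sum_mono)
      fix x assume x: "x \<in> ?F"
      show "\<pi> x * P x x \<le> (\<Sum>y\<in>?F. \<pi> x * P x y)"
      proof (rule member_le_sum[where f="\<lambda>y. \<pi> x * P x y"])
        have xo: "x \<in> prod_space d X" using x by simp
        show "\<And>y. y \<in> ?F - {x} \<Longrightarrow> 0 \<le> \<pi> x * P x y"
          using pipos[OF xo] Pnn[OF xo] by (simp add: less_imp_le)
      qed (use x fF in auto)
    qed
    finally have "?m u / 2 \<le> NN R u u" unfolding marg_def by (simp add: sum_divide_distrib)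
    then show ?thesis unfolding proj_eq using marg_pos[OF u R] by (simp add: le_divide_eq)
  qed
  have rev: "?m u * ?A u w = ?m w * ?A w u" if "u \<in> ?U" "w \<in> ?U" for u w
    using marg_proj[OF that(1) R] marg_proj[OF that(2) R] NN_sym by simp
  show ?thesis unfolding good_def using fU m0 ms A0 rows lazy rev by auto
qed

lemma lift_dirichlet:
  assumes R: "R \<subseteq> {1..d}"
  shows "dirichlet (prod_space d X) \<pi> P (\<lambda>x. h (restrict x R))
       = dirichlet (PiE R X) (marg (prod_space d X) \<pi> R) (proj_chain (prod_space d X) \<pi> P R) h"
proof -
  let ?U = "PiE R X"
  have inner: "(\<Sum>y\<in>prod_space d X. \<pi> x * P x y * (h (restrict x R) - h (restrict y R))^2)
      = (\<Sum>u'\<in>?U. \<Sum>y\<in>{y \<in> prod_space d X. restrict y R = u'}. \<pi> x * P x y * (h (restrict x R) - h u')^2)" for x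
    by (rule sum_group_R2[OF R, where G="\<lambda>y u'. \<pi> x * P x y * (h (restrict x R) - h u')^2"])
  have "(\<Sum>x\<in>prod_space d X. \<Sum>y\<in>prod_space d X. \<pi> x * P x y * (h (restrict x R) - h (restrict y R))^2)
      = (\<Sum>x\<in>prod_space d X. \<Sum>u'\<in>?U. \<Sum>y\<in>{y \<in> prod_space d X. restrict y R = u'}. \<pi> x * P x y * (h (restrict x R) - h u')^2)"
    unfolding inner ..
  also have "\<dots> = (\<Sum>u\<in>?U. \<Sum>x\<in>{x \<in> prod_space d X. restrict x R = u}. \<Sum>u'\<in>?U. \<Sum>y\<in>{y \<in> prod_space d X. restrict y R = u'}. \<pi> x * P x y * (h u - h u')^2)"
    by (rule sum_group_R2[OF R, where G="\<lambda>x u. \<Sum>u'\<in>?U. \<Sum>y\<in>{y \<in> prod_space d X. restrict y R = u'}. \<pi> x * P x y * (h u - h u')^2"])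
  also have "\<dots> = (\<Sum>u\<in>?U. \<Sum>u'\<in>?U. \<Sum>x\<in>{x \<in> prod_space d X. restrict x R = u}. \<Sum>y\<in>{y \<in> prod_space d X. restrict y R = u'}. \<pi> x * P x y * (h u - h u')^2)"
    by (intro sum.cong refl sum.swap)
  also have "\<dots> = (\<Sum>u\<in>?U. \<Sum>u'\<in>?U. NN R u u' * (h u - h u')^2)"
    unfolding NN_def by (simp add: sum_distrib_right)
  also have "\<dots> = (\<Sum>u\<in>?U. \<Sum>u'\<in>?U. marg (prod_space d X) \<pi> R u * proj_chain (prod_space d X) \<pi> P R u u' * (h u - h u')^2)"
    by (intro sum.cong refl) (simp add: marg_proj[OF _ R])
  finally show ?thesis unfolding dirichlet_def by simp
qed

lemma lift_expect:
  assumes R: "R \<subseteq> {1..d}"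
  shows "expect (prod_space d X) \<pi> (\<lambda>x. h (restrict x R)) = expect (PiE R X) (marg (prod_space d X) \<pi> R) h"
  unfolding expect_def by (rule lift_sum[OF R])

lemma lift_var:
  assumes R: "R \<subseteq> {1..d}"
  shows "var (prod_space d X) \<pi> (\<lambda>x. h (restrict x R)) = var (PiE R X) (marg (prod_space d X) \<pi> R) h"
  unfolding var_def lift_expect[OF R] by (rule lift_sum[OF R])

lemma gap_proj:
  assumes R: "R \<subseteq> {1..d}"
  shows "spectral_gap (prod_space d X) \<pi> P * var (PiE R X) (marg (prod_space d X) \<pi> R) h
       \<le> dirichlet (PiE R X) (marg (prod_space d X) \<pi> R) (proj_chain (prod_space d X) \<pi> P R) h"
  unfolding lift_var[OF R, symmetric] lift_dirichlet[OF R, symmetric]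
  by (rule gap_lower) (auto intro: less_imp_le pipos Pnn)

end


lemma dirichlet_reindex:
  assumes h: "bij_betw h Z \<Omega>"
  shows "dirichlet \<Omega> \<mu> Q F = dirichlet Z (\<lambda>z. \<mu> (h z)) (\<lambda>z z'. Q (h z) (h z')) (\<lambda>z. F (h z))"
proof -
  have "(\<Sum>x\<in>\<Omega>. \<Sum>y\<in>\<Omega>. \<mu> x * Q x y * (F x - F y)^2) = (\<Sum>z\<in>Z. \<Sum>y\<in>\<Omega>. \<mu> (h z) * Q (h z) y * (F (h z) - F y)^2)"
    by (rule sum.reindex_bij_betw[OF h, symmetric])
  also have "\<dots> = (\<Sum>z\<in>Z. \<Sum>z'\<in>Z. \<mu> (h z) * Q (h z) (h z') * (F (h z) - F (h z'))^2)"
    by (intro sum.cong refl) (rule sum.reindex_bij_betw[OF h, symmetric])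
  finally show ?thesis unfolding dirichlet_def by simp
qed

lemma expect_reindex:
  assumes h: "bij_betw h Z \<Omega>"
  shows "expect \<Omega> \<mu> F = expect Z (\<lambda>z. \<mu> (h z)) (\<lambda>z. F (h z))"
  unfolding expect_def by (rule sum.reindex_bij_betw[OF h, symmetric])

lemma var_reindex:
  assumes h: "bij_betw h Z \<Omega>"
  shows "var \<Omega> \<mu> F = var Z (\<lambda>z. \<mu> (h z)) (\<lambda>z. F (h z))"
  unfolding var_def expect_reindex[OF h, symmetric] by (rule sum.reindex_bij_betw[OF h, symmetric])

lemma expect_cong:
  assumes "\<And>z. z \<in> Z \<Longrightarrow> \<mu> z = \<mu>' z" "\<And>z. z \<in> Z \<Longrightarrow> g z = g' z"
  shows "expect Z \<mu> g = expect Z \<mu>' g'"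
  unfolding expect_def using assms by (intro sum.cong) auto

lemma var_cong:
  assumes "\<And>z. z \<in> Z \<Longrightarrow> \<mu> z = \<mu>' z" "\<And>z. z \<in> Z \<Longrightarrow> g z = g' z"
  shows "var Z \<mu> g = var Z \<mu>' g'"
proof -
  have e: "expect Z \<mu> g = expect Z \<mu>' g'" by (rule expect_cong[OF assms])
  show ?thesis unfolding var_def e using assms by (intro sum.cong) auto
qed

lemma dirichlet_cong:
  assumes "\<And>z. z \<in> Z \<Longrightarrow> \<mu> z = \<mu>' z" "\<And>z z'. z \<in> Z \<Longrightarrow> z' \<in> Z \<Longrightarrow> Q z z' = Q' z z'"
    "\<And>z. z \<in> Z \<Longrightarrow> g z = g' z"
  shows "dirichlet Z \<mu> Q g = dirichlet Z \<mu>' Q' g'"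
  unfolding dirichlet_def using assms by (intro arg_cong[where f="\<lambda>t. 1/2 * t"] sum.cong refl) auto

lemma var_zero_iff:
  fixes \<mu> :: "'x \<Rightarrow> real"
  assumes fin: "finite Z" and pos: "\<And>x. x \<in> Z \<Longrightarrow> \<mu> x > 0" and s: "sum \<mu> Z = 1"
  shows "var Z \<mu> f = 0 \<longleftrightarrow> (\<forall>x\<in>Z. \<forall>y\<in>Z. f x = f y)"
proof
  assume v: "var Z \<mu> f = 0"
  have "\<forall>x\<in>Z. \<mu> x * (f x - expect Z \<mu> f)^2 = 0"
    using v unfolding var_def
  proof (subst sum_nonneg_eq_0_iff[OF fin, symmetric])
    show "\<And>x. x \<in> Z \<Longrightarrow> 0 \<le> \<mu> x * (f x - expect Z \<mu> f)^2"
      using pos by (simp add: less_imp_le)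
  qed simp
  then have "\<forall>x\<in>Z. f x = expect Z \<mu> f" using pos by fastforce
  then show "\<forall>x\<in>Z. \<forall>y\<in>Z. f x = f y" by simp
next
  assume c: "\<forall>x\<in>Z. \<forall>y\<in>Z. f x = f y"
  show "var Z \<mu> f = 0"
  proof (cases "Z = {}")
    case True then show ?thesis by (simp add: var_def)
  next
    case False
    then obtain x0 where x0: "x0 \<in> Z" by auto
    have cx: "\<And>x. x \<in> Z \<Longrightarrow> f x = f x0" using c x0 by blast
    have e: "expect Z \<mu> f = f x0"
    proof -
      have "expect Z \<mu> f = (\<Sum>x\<in>Z. \<mu> x * f x0)" unfolding expect_def using cx by (intro sum.cong) auto
      also have "\<dots> = f x0" using s by (simp add: sum_distrib_right[symmetric])
      finally show ?thesis .
    qed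
    show ?thesis unfolding var_def e using cx by (intro sum.neutral) auto
  qed
qed

context
  fixes d :: nat and X :: "nat \<Rightarrow> 'a set" and \<pi> :: "(nat \<Rightarrow> 'a) \<Rightarrow> real"
    and P :: "(nat \<Rightarrow> 'a) \<Rightarrow> (nat \<Rightarrow> 'a) \<Rightarrow> real" and S :: "nat set"
  assumes finX: "\<And>j. j \<in> {1..d} \<Longrightarrow> finite (X j)"
    and pm: "prob_mass_pos (prod_space d X) \<pi>"
    and st: "stochastic_on (prod_space d X) P"
    and lz: "lazy_on (prod_space d X) P"
    and rv: "reversible_on (prod_space d X) \<pi> P"
    and S: "S \<subseteq> {1..d}"
begin

lemmas ctx = finX pm st lz rv

definition mrg :: "(nat \<Rightarrow> 'a) \<Rightarrow> (nat \<Rightarrow> 'a) \<Rightarrow> nat \<Rightarrow> 'a" where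
  "mrg u v = (\<lambda>i. if i \<in> S then u i else v i)"

lemma T: "{1..d} - S \<subseteq> {1..d}" by auto

lemma mrg_in: "u \<in> PiE S X \<Longrightarrow> v \<in> PiE ({1..d} - S) X \<Longrightarrow> mrg u v \<in> prod_space d X"
  unfolding mrg_def prod_space_def using S by (auto simp: PiE_iff extensional_def)

lemma restr_mrg1: "u \<in> PiE S X \<Longrightarrow> restrict (mrg u v) S = u"
  unfolding mrg_def by (auto simp: PiE_iff extensional_def restrict_def)

lemma restr_mrg2: "v \<in> PiE ({1..d} - S) X \<Longrightarrow> restrict (mrg u v) ({1..d} - S) = v"
  unfolding mrg_def using S by (auto simp: PiE_iff extensional_def restrict_def)

lemma mrg_restr: "x \<in> prod_space d X \<Longrightarrow> mrg (restrict x S) (restrict x ({1..d} - S)) = x"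
  unfolding mrg_def prod_space_def using S by (auto simp: PiE_iff extensional_def restrict_def)

lemma bij_mrg: "bij_betw (\<lambda>p. mrg (fst p) (snd p)) (PiE S X \<times> PiE ({1..d} - S) X) (prod_space d X)"
proof (rule bij_betw_byWitness[where f'="\<lambda>x. (restrict x S, restrict x ({1..d} - S))"])
  show "\<forall>a\<in>PiE S X \<times> PiE ({1..d} - S) X. (restrict (mrg (fst a) (snd a)) S, restrict (mrg (fst a) (snd a)) ({1..d} - S)) = a"
    using restr_mrg1 restr_mrg2 by auto
  show "\<forall>a'\<in>prod_space d X. mrg (fst (restrict a' S, restrict a' ({1..d} - S))) (snd (restrict a' S, restrict a' ({1..d} - S))) = a'"
    using mrg_restr by auto
  show "(\<lambda>p. mrg (fst p) (snd p)) ` (PiE S X \<times> PiE ({1..d} - S) X) \<subseteq> prod_space d X"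
    using mrg_in by auto
  show "(\<lambda>x. (restrict x S, restrict x ({1..d} - S))) ` prod_space d X \<subseteq> PiE S X \<times> PiE ({1..d} - S) X"
  proof (rule image_subsetI)
    fix x assume x: "x \<in> prod_space d X"
    show "(restrict x S, restrict x ({1..d} - S)) \<in> PiE S X \<times> PiE ({1..d} - S) X"
      by (rule SigmaI[OF restr_in[OF ctx x S] restr_in[OF ctx x T]])
  qed
qed

abbreviation "mu2 \<equiv> (\<lambda>p. marg (prod_space d X) \<pi> S (fst p) * marg (prod_space d X) \<pi> ({1..d} - S) (snd p))"
abbreviation "K2 \<equiv> (\<lambda>p q. proj_chain (prod_space d X) \<pi> P S (fst p) (fst q) * proj_chain (prod_space d X) \<pi> P ({1..d} - S) (snd p) (snd q))"

lemma tm_mrg: "p \<in> PiE S X \<times> PiE ({1..d} - S) X \<Longrightarrow> tensor_marg d X \<pi> S (mrg (fst p) (snd p)) = mu2 p"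
  unfolding tensor_marg_def using restr_mrg1 restr_mrg2 by auto

lemma tc_mrg: "p \<in> PiE S X \<times> PiE ({1..d} - S) X \<Longrightarrow> q \<in> PiE S X \<times> PiE ({1..d} - S) X \<Longrightarrow>
   tensor_chain d X \<pi> P S (mrg (fst p) (snd p)) (mrg (fst q) (snd q)) = K2 p q"
  unfolding tensor_chain_def using restr_mrg1 restr_mrg2 by auto

lemma dir_transfer:
  "dirichlet (prod_space d X) (tensor_marg d X \<pi> S) (tensor_chain d X \<pi> P S) F
   = dirichlet (PiE S X \<times> PiE ({1..d} - S) X) mu2 K2 (\<lambda>p. F (mrg (fst p) (snd p)))"
  unfolding dirichlet_reindex[OF bij_mrg]
  by (rule dirichlet_cong) (auto simp: tm_mrg tc_mrg)

lemma var_transfer: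
  "var (prod_space d X) (tensor_marg d X \<pi> S) F
   = var (PiE S X \<times> PiE ({1..d} - S) X) mu2 (\<lambda>p. F (mrg (fst p) (snd p)))"
  unfolding var_reindex[OF bij_mrg]
  by (rule var_cong) (auto simp: tm_mrg)

lemma tm_pos: "x \<in> prod_space d X \<Longrightarrow> tensor_marg d X \<pi> S x > 0"
  unfolding tensor_marg_def
  by (intro mult_pos_pos marg_pos[OF ctx] restr_in[OF ctx] S T) auto

lemma tm_sum: "sum (tensor_marg d X \<pi> S) (prod_space d X) = 1"
proof -
  have "sum (tensor_marg d X \<pi> S) (prod_space d X) = (\<Sum>p\<in>PiE S X \<times> PiE ({1..d} - S) X. tensor_marg d X \<pi> S (mrg (fst p) (snd p)))"
    by (rule sum.reindex_bij_betw[OF bij_mrg, symmetric])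
  also have "\<dots> = (\<Sum>p\<in>PiE S X \<times> PiE ({1..d} - S) X. mu2 p)"
    by (intro sum.cong refl tm_mrg)
  also have "\<dots> = sum (marg (prod_space d X) \<pi> S) (PiE S X) * sum (marg (prod_space d X) \<pi> ({1..d} - S)) (PiE ({1..d} - S) X)"
    unfolding sum_times_split sum_product by simp
  also have "\<dots> = 1"
    using good_proj[OF ctx S] good_proj[OF ctx T] unfolding good_def by simp
  finally show ?thesis .
qed

lemma tensor_bound:
  assumes c0: "spectral_gap (prod_space d X) \<pi> P \<ge> 0"
  shows "dirichlet (prod_space d X) (tensor_marg d X \<pi> S) (tensor_chain d X \<pi> P S) F
       \<ge> spectral_gap (prod_space d X) \<pi> P * var (prod_space d X) (tensor_marg d X \<pi> S) F"
  unfolding dir_transfer var_transfer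
  by (rule product_bound[OF good_proj[OF ctx S] good_proj[OF ctx T] c0 gap_proj[OF ctx S] gap_proj[OF ctx T]])

end


theorem corollary2p31:
  fixes d :: nat and X :: "nat \<Rightarrow> 'a set" and \<pi> :: "(nat \<Rightarrow> 'a) \<Rightarrow> real"
    and P :: "(nat \<Rightarrow> 'a) \<Rightarrow> (nat \<Rightarrow> 'a) \<Rightarrow> real" and S :: "nat set"
  assumes "\<And>j. j \<in> {1..d} \<Longrightarrow> finite (X j)"
    and "prob_mass_pos (prod_space d X) \<pi>"
    and "S \<noteq> {}" and "S \<subseteq> {1..d}"
    and "stochastic_on (prod_space d X) P"
    and "lazy_on (prod_space d X) P"
    and "ergodic_on (prod_space d X) P"
    and "reversible_on (prod_space d X) \<pi> P"
  shows "spectral_gap (prod_space d X) \<pi> P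
           \<le> spectral_gap (prod_space d X) (tensor_marg d X \<pi> S) (tensor_chain d X \<pi> P S)
       \<and> t_rel (prod_space d X) \<pi> P
           \<ge> t_rel (prod_space d X) (tensor_marg d X \<pi> S) (tensor_chain d X \<pi> P S)"
proof -
  note ctx = assms(1) assms(2) assms(5) assms(6) assms(8)
  note ctxS = assms(1) assms(2) assms(5) assms(6) assms(8) assms(4)
  have fin: "finite (prod_space d X)" by (rule finOm[OF ctx])
  have irr: "irreducible_on (prod_space d X) P" using assms(7) unfolding ergodic_on_def by simp
  have pipos: "\<And>x. x \<in> prod_space d X \<Longrightarrow> \<pi> x > 0" and pisum: "sum \<pi> (prod_space d X) = 1"
    using assms(2) unfolding prob_mass_pos_def by auto
  have tpos: "\<And>x. x \<in> prod_space d X \<Longrightarrow> tensor_marg d X \<pi> S x > 0" by (rule tm_pos[OF ctxS])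
  have tsum: "sum (tensor_marg d X \<pi> S) (prod_space d X) = 1" by (rule tm_sum[OF ctxS])
  have const_iff: "var (prod_space d X) \<pi> f = 0 \<longleftrightarrow> var (prod_space d X) (tensor_marg d X \<pi> S) f = 0" for f
    using var_zero_iff[OF fin pipos pisum, of f] var_zero_iff[OF fin tpos tsum, of f] by simp
  show ?thesis
  proof (cases "\<exists>f. var (prod_space d X) \<pi> f \<noteq> 0")
    case True
    then obtain f0 where f0: "var (prod_space d X) \<pi> f0 \<noteq> 0" by blast
    obtain \<kappa> where kpos: "\<kappa> > 0" and kb: "\<And>f. dirichlet (prod_space d X) \<pi> P f \<ge> \<kappa> * var (prod_space d X) \<pi> f"
      using irreducible_poincare[OF fin assms(2) assms(5) irr] by blast
    have Pnn: "\<And>x y. x \<in> prod_space d X \<Longrightarrow> y \<in> prod_space d X \<Longrightarrow> P x y \<ge> 0"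
      using assms(5) unfolding stochastic_on_def by auto
    have gP: "\<kappa> \<le> spectral_gap (prod_space d X) \<pi> P"
      unfolding spectral_gap_def
    proof (rule cInf_greatest)
      show "{dirichlet (prod_space d X) \<pi> P f / var (prod_space d X) \<pi> f |f. var (prod_space d X) \<pi> f \<noteq> 0} \<noteq> {}"
        using f0 by blast
    next
      fix x assume "x \<in> {dirichlet (prod_space d X) \<pi> P f / var (prod_space d X) \<pi> f |f. var (prod_space d X) \<pi> f \<noteq> 0}"
      then obtain f where x: "x = dirichlet (prod_space d X) \<pi> P f / var (prod_space d X) \<pi> f"
        and v: "var (prod_space d X) \<pi> f \<noteq> 0" by blast
      have "var (prod_space d X) \<pi> f \<ge> 0" by (rule var_nonneg) (simp add: pipos less_imp_le)
      then have vp: "var (prod_space d X) \<pi> f > 0" using v by linarith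
      show "\<kappa> \<le> x" unfolding x using kb[of f] vp by (simp add: le_divide_eq)
    qed
    have gPpos: "spectral_gap (prod_space d X) \<pi> P > 0" using gP kpos by linarith
    have c0: "0 \<le> spectral_gap (prod_space d X) \<pi> P" using gPpos by linarith
    have gK: "spectral_gap (prod_space d X) \<pi> P \<le> spectral_gap (prod_space d X) (tensor_marg d X \<pi> S) (tensor_chain d X \<pi> P S)"
      unfolding spectral_gap_def[of _ "tensor_marg d X \<pi> S"]
    proof (rule cInf_greatest)
      show "{dirichlet (prod_space d X) (tensor_marg d X \<pi> S) (tensor_chain d X \<pi> P S) f / var (prod_space d X) (tensor_marg d X \<pi> S) f |f.
          var (prod_space d X) (tensor_marg d X \<pi> S) f \<noteq> 0} \<noteq> {}"
        using f0 const_iff by blast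
    next
      fix x assume "x \<in> {dirichlet (prod_space d X) (tensor_marg d X \<pi> S) (tensor_chain d X \<pi> P S) f / var (prod_space d X) (tensor_marg d X \<pi> S) f |f.
          var (prod_space d X) (tensor_marg d X \<pi> S) f \<noteq> 0}"
      then obtain f where x: "x = dirichlet (prod_space d X) (tensor_marg d X \<pi> S) (tensor_chain d X \<pi> P S) f / var (prod_space d X) (tensor_marg d X \<pi> S) f"
        and v: "var (prod_space d X) (tensor_marg d X \<pi> S) f \<noteq> 0" by blast
      have "var (prod_space d X) (tensor_marg d X \<pi> S) f \<ge> 0" by (rule var_nonneg) (simp add: tpos less_imp_le)
      then have vp: "var (prod_space d X) (tensor_marg d X \<pi> S) f > 0" using v by linarith
      have b: "spectral_gap (prod_space d X) \<pi> P * var (prod_space d X) (tensor_marg d X \<pi> S) f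
          \<le> dirichlet (prod_space d X) (tensor_marg d X \<pi> S) (tensor_chain d X \<pi> P S) f"
        using tensor_bound[OF ctxS c0] .
      show "spectral_gap (prod_space d X) \<pi> P \<le> x" unfolding x using b vp by (simp add: le_divide_eq)
    qed
    have "t_rel (prod_space d X) (tensor_marg d X \<pi> S) (tensor_chain d X \<pi> P S) \<le> t_rel (prod_space d X) \<pi> P"
      unfolding t_rel_def using le_imp_inverse_le[OF gK gPpos] by (simp add: inverse_eq_divide)
    then show ?thesis using gK by simp
  next
    case False
    then have z1: "\<And>f. var (prod_space d X) \<pi> f = 0" by blast
    then have z2: "\<And>f. var (prod_space d X) (tensor_marg d X \<pi> S) f = 0" using const_iff by blast
    have e1: "{dirichlet (prod_space d X) \<pi> P f / var (prod_space d X) \<pi> f |f. var (prod_space d X) \<pi> f \<noteq> 0} = {}"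
      using z1 by blast
    have e2: "{dirichlet (prod_space d X) (tensor_marg d X \<pi> S) (tensor_chain d X \<pi> P S) f / var (prod_space d X) (tensor_marg d X \<pi> S) f |f.
          var (prod_space d X) (tensor_marg d X \<pi> S) f \<noteq> 0} = {}"
      using z2 by blast
    have eq: "spectral_gap (prod_space d X) \<pi> P = spectral_gap (prod_space d X) (tensor_marg d X \<pi> S) (tensor_chain d X \<pi> P S)"
      unfolding spectral_gap_def e1 e2 ..
    show ?thesis unfolding t_rel_def eq by simp
  qed
qed


end
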